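(* Let $K\in\mathbb N$, $\delta\in(0,1)$, and for each $i\in[K]$ let $C_i:[0,1]\to 2^{\Theta_i}$ be a nonincreasing, upper semicontinuous confidence-interval constructor such that $C_i(\alpha)$ is a $(1-\alpha)$-CI for $\theta_i$. Let $C_i^{\mathrm{cal}}$ be the e-CI constructor obtained by calibrating $C_i$ with $f^{\mathrm{BY}(\delta,K)}$, i.e. $C_i^{\mathrm{cal}}(\alpha)=\{\theta\in\Theta_i: f^{\mathrm{BY}(\delta,K)}(P_i^{\mathrm{dual}}(\theta))<1/\alpha\}$ where $P_i^{\mathrm{dual}}(\theta)=\inf\{\alpha\in[0,1]:\theta\notin C_i(\alpha)\}$. Then for any selected set $S\subseteq[K]$, the BY procedure under arbitrary dependence at level $\delta$, which reports $C_i(\delta|S|/(K\ell_K))$ for $i\in S$, outputs the same intervals as the e-BY procedure at level $\delta$ applied to $C_i^{\mathrm{cal}}$, which reports $C_i^{\mathrm{cal}}(\delta|S|/K)$ for $i\in S$.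
   Context: $\ell_K=\sum_{k=1}^K1/k$. The calibrator is $f^{\mathrm{BY}(\delta,K)}(x)=K/(\delta\lceil K\ell_K x/\delta\rceil)$ for $x\le\delta/\ell_K$ and $0$ for $x>\delta/\ell_K$; a calibrator is a nonincreasing $f:[0,1]\to[0,\infty]$ with $\int_0^1 f\le1$. *)

theory Defs
  imports "HOL-Probability.Probability"
begin

definition harm :: "nat \<Rightarrow> real" where
  "harm K = (\<Sum>k=1..K. 1 / real k)"

text \<open>The BY calibrator; values in [0,\<infinity>] (ereal), so f(0) = K/(\<delta>*0) = \<infinity>.\<close>
definition f_BY :: "real \<Rightarrow> nat \<Rightarrow> real \<Rightarrow> ereal" where
  "f_BY \<delta> K x =
     (if x \<le> \<delta> / harm K
      then ereal (real K) / ereal (\<delta> * real_of_int \<lceil>real K * harm K * x / \<delta>\<rceil>)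
      else 0)"

definition P_dual :: "(real \<Rightarrow> 'a set) \<Rightarrow> 'a \<Rightarrow> real" where
  "P_dual C \<theta> = (if {\<alpha>\<in>{0..1}. \<theta> \<notin> C \<alpha>} = {} then 1 else Inf {\<alpha>\<in>{0..1}. \<theta> \<notin> C \<alpha>})"

text \<open>Calibrated (e-CI) constructor: C^cal(\<alpha>) = {\<theta> \<in> \<Theta> : f(P_dual(\<theta>)) < 1/\<alpha>} (1/0 = \<infinity> in ereal).\<close>
definition calibrate :: "(real \<Rightarrow> ereal) \<Rightarrow> 'a set \<Rightarrow> (real \<Rightarrow> 'a set) \<Rightarrow> real \<Rightarrow> 'a set" where
  "calibrate f \<Theta> C \<alpha> = {\<theta>\<in>\<Theta>. f (P_dual C \<theta>) < 1 / ereal \<alpha>}"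

definition nonincr_ci :: "(real \<Rightarrow> 'a set) \<Rightarrow> bool" where
  "nonincr_ci C \<longleftrightarrow> (\<forall>\<alpha> \<beta>. 0 \<le> \<alpha> \<longrightarrow> \<alpha> \<le> \<beta> \<longrightarrow> \<beta> \<le> 1 \<longrightarrow> C \<beta> \<subseteq> C \<alpha>)"

text \<open>Upper semicontinuity: for each \<theta>, the map \<alpha> \<mapsto> indicator(\<theta> \<notin> C \<alpha>) is upper
  semicontinuous on [0,1], i.e. the set {\<alpha>\<in>[0,1]. \<theta> \<notin> C \<alpha>} is closed.\<close>
definition usc_ci :: "(real \<Rightarrow> 'a set) \<Rightarrow> bool" where
  "usc_ci C \<longleftrightarrow> (\<forall>\<theta>. closed {\<alpha>\<in>{0..1}. \<theta> \<notin> C \<alpha>})"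

definition is_CI :: "'w measure \<Rightarrow> 'a \<Rightarrow> ('w \<Rightarrow> 'a set) \<Rightarrow> real \<Rightarrow> bool" where
  "is_CI M \<theta> C \<alpha> \<longleftrightarrow>
     {w\<in>space M. \<theta> \<in> C w} \<in> sets M \<and> measure M {w\<in>space M. \<theta> \<in> C w} \<ge> 1 - \<alpha>"

end

theory Submission
  imports Defs
begin

lemma harm_ge1: "1 \<le> K \<Longrightarrow> 1 \<le> harm K"
proof -
  assume "1 \<le> K"
  have "(\<lambda>k. 1 / real k) 1 \<le> (\<Sum>k=1..K. 1 / real k)"
    by (rule member_le_sum) (use \<open>1 \<le> K\<close> in auto)
  then show ?thesis by (simp add: harm_def)
qed

lemma pdual_char:
  fixes D :: "real \<Rightarrow> 'a set"
  assumes ni: "nonincr_ci D" and us: "usc_ci D"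
    and a0: "0 \<le> a" and a1: "a < 1"
  shows "\<theta> \<in> D a \<longleftrightarrow> a < P_dual D \<theta>" and "0 \<le> P_dual D \<theta>" and "P_dual D \<theta> \<le> 1"
proof -
  define A where "A = {\<alpha>\<in>{0..1}. \<theta> \<notin> D \<alpha>}"
  have cl: "closed A" using us unfolding usc_ci_def A_def by blast
  have up: "\<beta> \<in> A" if "\<alpha> \<in> A" "\<alpha> \<le> \<beta>" "\<beta> \<le> 1" for \<alpha> \<beta>
    using that ni unfolding A_def nonincr_ci_def by auto
  have bdd: "bdd_below A" unfolding A_def by (rule bdd_belowI[of _ 0]) auto
  have "(\<theta> \<in> D a \<longleftrightarrow> a < P_dual D \<theta>) \<and> 0 \<le> P_dual D \<theta> \<and> P_dual D \<theta> \<le> 1"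
  proof (cases "A = {}")
    case True
    then have "P_dual D \<theta> = 1" unfolding P_dual_def A_def by simp
    moreover have "a \<notin> A" using True by simp
    ultimately show ?thesis using a0 a1 unfolding A_def by auto
  next
    case False
    then have P: "P_dual D \<theta> = Inf A" unfolding P_dual_def A_def by (simp only: if_False)
    have IA: "Inf A \<in> A" using closed_contains_Inf[OF False bdd cl] .
    have "a \<in> A \<longleftrightarrow> Inf A \<le> a"
      using cInf_lower[OF _ bdd, of a] up[OF IA, of a] a1 by auto
    moreover have "a \<in> A \<longleftrightarrow> \<theta> \<notin> D a" using a0 a1 unfolding A_def by auto
    moreover have "0 \<le> Inf A \<and> Inf A \<le> 1" using IA unfolding A_def by auto
    ultimately show ?thesis using P by auto
  qed
  then show "\<theta> \<in> D a \<longleftrightarrow> a < P_dual D \<theta>" and "0 \<le> P_dual D \<theta>" and "P_dual D \<theta> \<le> 1"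
    by auto
qed

lemma f_char:
  fixes P \<delta> :: real and s K :: nat
  assumes d0: "0 < \<delta>" and d1: "\<delta> < 1" and s1: "1 \<le> s" and sK: "s \<le> K"
    and P0: "0 \<le> P" and P1: "P \<le> 1"
  shows "f_BY \<delta> K P < 1 / ereal (\<delta> * real s / real K) \<longleftrightarrow> \<delta> * real s / (real K * harm K) < P"
proof -
  define L where "L = harm K"
  have L1: "1 \<le> L" using harm_ge1[of K] s1 sK unfolding L_def by simp
  have Kpos: "0 < real K" using s1 sK by simp
  have spos: "0 < real s" using s1 by simp
  have inv: "1 / ereal (\<delta> * real s / real K) = ereal (real K / (\<delta> * real s))"
    using d0 Kpos spos by (simp add: one_ereal_def)
  have aeq: "\<delta> * real s / (real K * L) < P \<longleftrightarrow> real s < real K * L * P / \<delta>"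
    using d0 Kpos L1 by (simp add: field_simps)
  have ale: "\<delta> * real s / (real K * L) \<le> \<delta> / L"
    using d0 Kpos L1 sK by (simp add: field_simps)
  show ?thesis
  proof (cases "P \<le> \<delta> / L")
    case False
    then have "f_BY \<delta> K P = 0" unfolding f_BY_def L_def by simp
    then show ?thesis using False ale inv d0 Kpos spos unfolding L_def[symmetric]
      by (simp add: zero_ereal_def)
  next
    case True
    define n where "n = \<lceil>real K * L * P / \<delta>\<rceil>"
    have f: "f_BY \<delta> K P = ereal (real K) / ereal (\<delta> * real_of_int n)"
      using True unfolding f_BY_def n_def L_def by simp
    have "0 \<le> real K * L * P / \<delta>" using d0 Kpos L1 P0 by simp
    then have n0: "0 \<le> n" unfolding n_def by linarith
    show ?thesis
    proof (cases "n = 0")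
      case True
      then have "f_BY \<delta> K P = \<infinity>" using f Kpos by simp
      moreover have "real K * L * P / \<delta> \<le> 0" using True unfolding n_def
        by linarith
      ultimately show ?thesis using aeq inv spos unfolding L_def[symmetric] by auto
    next
      case False
      then have npos: "0 < real_of_int n" using n0 by simp
      have "f_BY \<delta> K P = ereal (real K / (\<delta> * real_of_int n))" using f npos d0 by simp
      then have "f_BY \<delta> K P < 1 / ereal (\<delta> * real s / real K) \<longleftrightarrow>
          real K / (\<delta> * real_of_int n) < real K / (\<delta> * real s)" using inv by simp
      also have "\<dots> \<longleftrightarrow> real s < real_of_int n"
        using Kpos d0 npos spos by (simp add: field_simps)
      also have "\<dots> \<longleftrightarrow> int s < n" by linarith
      also have "\<dots> \<longleftrightarrow> real s < real K * L * P / \<delta>" unfolding n_def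
        by (simp add: less_ceiling_iff)
      finally show ?thesis using aeq unfolding L_def by simp
    qed
  qed
qed

theorem corollary1:
  fixes M :: "'w measure" and K :: nat and \<delta> :: real
    and \<Theta> :: "nat \<Rightarrow> 'a set" and \<theta> :: "nat \<Rightarrow> 'a"
    and C :: "'w \<Rightarrow> nat \<Rightarrow> real \<Rightarrow> 'a set"
    and S :: "nat set" and w :: 'w
  assumes "prob_space M"
    and "0 < \<delta>" and "\<delta> < 1"
    and "\<forall>i\<in>{1..K}. \<theta> i \<in> \<Theta> i"
    and "\<forall>i\<in>{1..K}. \<forall>v\<in>space M. nonincr_ci (C v i) \<and> usc_ci (C v i)
                                     \<and> (\<forall>\<alpha>\<in>{0..1}. C v i \<alpha> \<subseteq> \<Theta> i)"
    and "\<forall>i\<in>{1..K}. \<forall>\<alpha>\<in>{0..1}. is_CI M (\<theta> i) (\<lambda>v. C v i \<alpha>) \<alpha>"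
    and "S \<subseteq> {1..K}"
    and "w \<in> space M"
  shows "\<forall>i\<in>S. C w i (\<delta> * real (card S) / (real K * harm K))
               = calibrate (f_BY \<delta> K) (\<Theta> i) (C w i) (\<delta> * real (card S) / real K)"
proof
  fix i assume iS: "i \<in> S"
  have iK: "i \<in> {1..K}" using iS assms(7) by auto
  have fin: "finite S" using assms(7) finite_subset by blast
  have s1: "1 \<le> card S" using iS fin by (simp add: Suc_le_eq card_gt_0_iff) blast
  have sK: "card S \<le> K" using card_mono[OF _ assms(7)] by simp
  define D where "D = C w i"
  have ni: "nonincr_ci D" and us: "usc_ci D" and sub: "\<forall>\<alpha>\<in>{0..1}. D \<alpha> \<subseteq> \<Theta> i"
    using assms(5) iK assms(8) unfolding D_def by auto
  define a where "a = \<delta> * real (card S) / (real K * harm K)"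
  have L1: "1 \<le> harm K" using harm_ge1[of K] s1 sK by simp
  have Kpos: "0 < real K" using s1 sK by simp
  have a0: "0 \<le> a" unfolding a_def using assms(2) Kpos L1 by simp
  have "a \<le> \<delta> / harm K" unfolding a_def using assms(2) Kpos L1 sK by (simp add: field_simps)
  also have "\<dots> < 1" using assms(2,3) L1 by (simp add: field_simps)
  finally have a1: "a < 1" .
  have sa: "D a \<subseteq> \<Theta> i" using sub a0 a1 by auto
  show "C w i (\<delta> * real (card S) / (real K * harm K))
               = calibrate (f_BY \<delta> K) (\<Theta> i) (C w i) (\<delta> * real (card S) / real K)"
    unfolding D_def[symmetric] a_def[symmetric]
  proof (rule set_eqI)
    fix t
    have 1: "t \<in> D a \<longleftrightarrow> a < P_dual D t" and 2: "0 \<le> P_dual D t" and 3: "P_dual D t \<le> 1"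
      using pdual_char[OF ni us a0 a1] by auto
    have 4: "f_BY \<delta> K (P_dual D t) < 1 / ereal (\<delta> * real (card S) / real K) \<longleftrightarrow> a < P_dual D t"
      using f_char[OF assms(2,3) s1 sK 2 3] unfolding a_def .
    show "t \<in> D a \<longleftrightarrow> t \<in> calibrate (f_BY \<delta> K) (\<Theta> i) D (\<delta> * real (card S) / real K)"
      unfolding calibrate_def using 1 4 sa by auto
  qed
qed

end
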